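(* Let $h,n\geq2$. If $U\leq G$ is a symmetry group with respect to $(h,n)$, then $U$ is regular and $O(U)=U$.
   Context: Permutations compose as $(\sigma\tau)(x)=\sigma(\tau(x))$. Let $G=S_h\times S_n$ and $\mathcal{P}=(S_n)^h$ (preference profiles), with $G$ acting by $(p^{(\varphi,\psi)})_i=\psi\,p_{\varphi^{-1}(i)}$; $p^U=\{p^g:g\in U\}$. $U\leq G$ is regular if for every $p$, $\{g\in U:p^g=p\}\subseteq S_h\times\{id\}$. A social preference function (SPF) is any $F:\mathcal{P}\to S_n$; $G(F)=\{(\varphi,\psi)\in G: F(p^{(\varphi,\psi)})=\psi F(p)\ \forall p\}$; $U$ is a symmetry group with respect to $(h,n)$ if $U=G(F)$ for some SPF $F$. For regular $U$, $\mathcal{A}(U)$ is the set of regular $V\leq G$ with $V\geq U$ and $p^V\subseteq p^U$ for all $p$, and $O(U)=\langle\mathcal{A}(U)\rangle$. *)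

theory Defs
  imports "HOL-Combinatorics.Permutations" "HOL-Algebra.Generated_Groups"
begin

text \<open>Voters are 0..h-1, alternatives are 0..n-1. Permutations are functions
  on nat that permute the relevant index set (identity outside).\<close>

definition perms :: "nat \<Rightarrow> (nat \<Rightarrow> nat) set" where
  "perms k = {\<sigma>. \<sigma> permutes {..<k}}"

definition Ggrp :: "nat \<Rightarrow> nat \<Rightarrow> ((nat \<Rightarrow> nat) \<times> (nat \<Rightarrow> nat)) monoid" where
  "Ggrp h n = \<lparr> carrier = perms h \<times> perms n,
               mult = (\<lambda>a b. (fst a \<circ> fst b, snd a \<circ> snd b)),
               one = (id, id) \<rparr>"

definition profiles :: "nat \<Rightarrow> nat \<Rightarrow> (nat \<Rightarrow> nat \<Rightarrow> nat) set" where
  "profiles h n = {p. (\<forall>i<h. p i \<in> perms n) \<and> (\<forall>i\<ge>h. p i = id)}"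

definition act :: "nat \<Rightarrow> (nat \<Rightarrow> nat \<Rightarrow> nat) \<Rightarrow> (nat \<Rightarrow> nat) \<times> (nat \<Rightarrow> nat)
                    \<Rightarrow> (nat \<Rightarrow> nat \<Rightarrow> nat)" where
  "act h p g = (\<lambda>i. if i < h then snd g \<circ> p (Hilbert_Choice.inv (fst g) i) else id)"

definition orbit :: "nat \<Rightarrow> (nat \<Rightarrow> nat \<Rightarrow> nat) \<Rightarrow> ((nat \<Rightarrow> nat) \<times> (nat \<Rightarrow> nat)) set
                      \<Rightarrow> (nat \<Rightarrow> nat \<Rightarrow> nat) set" where
  "orbit h p U = act h p ` U"

definition regular :: "nat \<Rightarrow> nat \<Rightarrow> ((nat \<Rightarrow> nat) \<times> (nat \<Rightarrow> nat)) set \<Rightarrow> bool" where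
  "regular h n U \<longleftrightarrow> subgroup U (Ggrp h n) \<and>
     (\<forall>p\<in>profiles h n. {g\<in>U. act h p g = p} \<subseteq> perms h \<times> {id})"

definition is_SPF :: "nat \<Rightarrow> nat \<Rightarrow> ((nat \<Rightarrow> nat \<Rightarrow> nat) \<Rightarrow> (nat \<Rightarrow> nat)) \<Rightarrow> bool" where
  "is_SPF h n F \<longleftrightarrow> (\<forall>p\<in>profiles h n. F p \<in> perms n)"

definition symgroup_of :: "nat \<Rightarrow> nat \<Rightarrow> ((nat \<Rightarrow> nat \<Rightarrow> nat) \<Rightarrow> (nat \<Rightarrow> nat))
                           \<Rightarrow> ((nat \<Rightarrow> nat) \<times> (nat \<Rightarrow> nat)) set" where
  "symgroup_of h n F = {g \<in> perms h \<times> perms n.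
                          \<forall>p\<in>profiles h n. F (act h p g) = snd g \<circ> F p}"

definition symmetry_group :: "nat \<Rightarrow> nat \<Rightarrow> ((nat \<Rightarrow> nat) \<times> (nat \<Rightarrow> nat)) set \<Rightarrow> bool" where
  "symmetry_group h n U \<longleftrightarrow> (\<exists>F. is_SPF h n F \<and> U = symgroup_of h n F)"

definition A_set :: "nat \<Rightarrow> nat \<Rightarrow> ((nat \<Rightarrow> nat) \<times> (nat \<Rightarrow> nat)) set
                      \<Rightarrow> ((nat \<Rightarrow> nat) \<times> (nat \<Rightarrow> nat)) set set" where
  "A_set h n U = {V. regular h n V \<and> U \<subseteq> V \<and>
                     (\<forall>p\<in>profiles h n. orbit h p V \<subseteq> orbit h p U)}"

definition O_grp :: "nat \<Rightarrow> nat \<Rightarrow> ((nat \<Rightarrow> nat) \<times> (nat \<Rightarrow> nat)) set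
                      \<Rightarrow> ((nat \<Rightarrow> nat) \<times> (nat \<Rightarrow> nat)) set" where
  "O_grp h n U = generate (Ggrp h n) (\<Union> (A_set h n U))"

end

theory Submission
  imports Defs
begin

lemma Ggrp_group: "group (Ggrp h n)"
proof (rule groupI)
  fix x y assume "x \<in> carrier (Ggrp h n)" "y \<in> carrier (Ggrp h n)"
  then show "x \<otimes>\<^bsub>Ggrp h n\<^esub> y \<in> carrier (Ggrp h n)"
    by (auto simp: Ggrp_def perms_def intro: permutes_compose)
next
  show "\<one>\<^bsub>Ggrp h n\<^esub> \<in> carrier (Ggrp h n)"
    by (auto simp: Ggrp_def perms_def permutes_id)
next
  fix x y z assume "x \<in> carrier (Ggrp h n)" "y \<in> carrier (Ggrp h n)" "z \<in> carrier (Ggrp h n)"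
  show "x \<otimes>\<^bsub>Ggrp h n\<^esub> y \<otimes>\<^bsub>Ggrp h n\<^esub> z = x \<otimes>\<^bsub>Ggrp h n\<^esub> (y \<otimes>\<^bsub>Ggrp h n\<^esub> z)"
    by (simp add: Ggrp_def comp_assoc)
next
  fix x assume "x \<in> carrier (Ggrp h n)"
  show "\<one>\<^bsub>Ggrp h n\<^esub> \<otimes>\<^bsub>Ggrp h n\<^esub> x = x" by (simp add: Ggrp_def)
next
  fix x assume x: "x \<in> carrier (Ggrp h n)"
  then have a: "fst x permutes {..<h}" and b: "snd x permutes {..<n}"
    by (auto simp: Ggrp_def perms_def)
  show "\<exists>y\<in>carrier (Ggrp h n). y \<otimes>\<^bsub>Ggrp h n\<^esub> x = \<one>\<^bsub>Ggrp h n\<^esub>"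
    apply (rule bexI[of _ "(Hilbert_Choice.inv (fst x), Hilbert_Choice.inv (snd x))"])
    using a b by (auto simp: Ggrp_def perms_def permutes_inv permutes_inv_o)
qed

lemma act_one: "p \<in> profiles h n \<Longrightarrow> act h p (id, id) = p"
  by (auto simp: act_def profiles_def inv_id fun_eq_iff)

lemma act_mult:
  assumes a: "a \<in> carrier (Ggrp h n)" and b: "b \<in> carrier (Ggrp h n)"
  shows "act h (act h p a) b = act h p (b \<otimes>\<^bsub>Ggrp h n\<^esub> a)"
proof -
  have pa: "fst a permutes {..<h}" and pb: "fst b permutes {..<h}"
    using a b by (auto simp: Ggrp_def perms_def)
  have ia: "Hilbert_Choice.inv (fst b \<circ> fst a) = Hilbert_Choice.inv (fst a) \<circ> Hilbert_Choice.inv (fst b)"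
    using pa pb by (simp add: o_inv_distrib permutes_bij)
  have lt: "i < h \<Longrightarrow> Hilbert_Choice.inv (fst b) i < h" for i
    using permutes_in_image[OF permutes_inv[OF pb]] by auto
  show ?thesis
    by (auto simp: act_def Ggrp_def ia lt fun_eq_iff)
qed

theorem mainTheorem16:
  fixes h n :: nat and U :: "((nat \<Rightarrow> nat) \<times> (nat \<Rightarrow> nat)) set"
  assumes "h \<ge> 2" and "n \<ge> 2"
    and "subgroup U (Ggrp h n)"
    and "symmetry_group h n U"
  shows "regular h n U \<and> O_grp h n U = U"
proof -
  let ?G = "Ggrp h n"
  interpret grp: group ?G by (rule Ggrp_group)
  obtain F where F: "is_SPF h n F" and UF: "U = symgroup_of h n F"
    using assms(4) unfolding symmetry_group_def by blast
  have Usub: "U \<subseteq> carrier ?G" using assms(3) subgroup.subset by blast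
  have reg: "regular h n U"
    unfolding regular_def
  proof (intro conjI ballI subsetI)
    show "subgroup U ?G" by (rule assms(3))
  next
    fix p g assume p: "p \<in> profiles h n" and g: "g \<in> {g \<in> U. act h p g = p}"
    then have gU: "g \<in> U" and ag: "act h p g = p" by auto
    have eq: "F p = snd g \<circ> F p" using gU p ag by (auto simp: UF symgroup_of_def)
    have "bij (F p)" using F p by (auto simp: is_SPF_def perms_def permutes_bij)
    then have "surj (F p)" by (simp add: bij_is_surj)
    have "snd g = id"
    proof
      fix x
      obtain y where y: "x = F p y" using surjD[OF \<open>surj (F p)\<close>, of x] by (erule exE)
      have "F p y = snd g (F p y)" using fun_cong[OF eq, of y] by (simp only: o_apply)
      then show "snd g x = id x" using y by (simp only: id_apply)
    qed
    moreover have "fst g \<in> perms h" using gU Usub by (auto simp: Ggrp_def)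
    ultimately show "g \<in> perms h \<times> {id}" by (cases g) auto
  qed
  have UA: "U \<in> A_set h n U" using reg by (auto simp: A_set_def)
  have VU: "V \<subseteq> U" if V: "V \<in> A_set h n U" for V
  proof
    fix g assume gV: "g \<in> V"
    have regV: "regular h n V" and UV: "U \<subseteq> V"
      and orb: "\<forall>p\<in>profiles h n. orbit h p V \<subseteq> orbit h p U"
      using V by (auto simp: A_set_def)
    have sV: "subgroup V ?G" using regV by (simp add: regular_def)
    have gc: "g \<in> carrier ?G" using gV sV subgroup.subset by blast
    have "\<forall>p\<in>profiles h n. F (act h p g) = snd g \<circ> F p"
    proof
      fix p assume p: "p \<in> profiles h n"
      have "act h p g \<in> orbit h p U" using orb p gV by (auto simp: orbit_def)
      then obtain u where uU: "u \<in> U" and agu: "act h p g = act h p u"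
        by (auto simp: orbit_def)
      have uc: "u \<in> carrier ?G" using uU Usub by blast
      have uV: "u \<in> V" using uU UV by blast
      define w where "w = inv\<^bsub>?G\<^esub> u \<otimes>\<^bsub>?G\<^esub> g"
      have wV: "w \<in> V" unfolding w_def using sV uV gV
        by (simp add: subgroup.m_closed subgroup.m_inv_closed)
      have iuc: "inv\<^bsub>?G\<^esub> u \<in> carrier ?G" using uc by simp
      have "act h p w = act h (act h p g) (inv\<^bsub>?G\<^esub> u)"
        unfolding w_def using act_mult[OF gc iuc] by simp
      also have "\<dots> = act h (act h p u) (inv\<^bsub>?G\<^esub> u)" using agu by simp
      also have "\<dots> = act h p (inv\<^bsub>?G\<^esub> u \<otimes>\<^bsub>?G\<^esub> u)"
        using act_mult[OF uc iuc] by simp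
      also have "\<dots> = act h p \<one>\<^bsub>?G\<^esub>" using uc by simp
      also have "\<dots> = p" using p act_one by (simp add: Ggrp_def)
      finally have "act h p w = p" .
      then have "w \<in> perms h \<times> {id}" using regV p wV unfolding regular_def by blast
      then have sw: "snd w = id" by auto
      have "g = u \<otimes>\<^bsub>?G\<^esub> w" unfolding w_def using uc gc
        by (simp add: grp.m_assoc[symmetric])
      then have "snd g = snd u" using sw by (simp add: Ggrp_def)
      moreover have "F (act h p u) = snd u \<circ> F p" using uU p by (auto simp: UF symgroup_of_def)
      ultimately show "F (act h p g) = snd g \<circ> F p" using agu by simp
    qed
    then show "g \<in> U" using gc by (auto simp: UF symgroup_of_def Ggrp_def)
  qed
  have UU: "\<Union> (A_set h n U) = U" using UA VU by blast
  have "generate ?G U = U"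
  proof
    show "generate ?G U \<subseteq> U" by (rule grp.generate_subgroup_incl[OF order_refl assms(3)])
    show "U \<subseteq> generate ?G U" by (auto intro: generate.incl)
  qed
  then show ?thesis using reg UU by (simp add: O_grp_def)
qed

end
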